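(* Let $b\ge2$ be an integer. Then for every positive integer $n$, \[2\sum_{m=1}^nH(n,m)b^m<\sum_{m=1}^{n+1}H(n+1,m)b^m.\]
   Context: A composition of a positive integer $n$ is an ordered tuple $(c_1,\ldots,c_m)$ of positive integers summing to $n$ ($m$ parts); it is headstrong if $c_1\ge c_i$ for all $i$. $H(n,m)$ is the number of headstrong compositions of $n$ with exactly $m$ parts. *)

theory Defs
  imports Main
begin

definition compositions :: "nat \<Rightarrow> nat \<Rightarrow> nat list set" where
  "compositions n m = {cs. length cs = m \<and> (\<forall>c\<in>set cs. c > 0) \<and> sum_list cs = n}"

definition headstrong :: "nat list \<Rightarrow> bool" where
  "headstrong cs \<longleftrightarrow> cs \<noteq> [] \<and> (\<forall>c\<in>set cs. c \<le> hd cs)"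

definition H :: "nat \<Rightarrow> nat \<Rightarrow> nat" where
  "H n m = card {cs \<in> compositions n m. headstrong cs}"

end

theory Submission
  imports Defs
begin

lemma fin_comp: "finite {cs \<in> compositions n m. headstrong cs}"
proof -
  have "{cs \<in> compositions n m. headstrong cs} \<subseteq> {xs. set xs \<subseteq> {..n} \<and> length xs = m}"
    by (auto simp: compositions_def member_le_sum_list)
  moreover have "finite {xs. set xs \<subseteq> {..n} \<and> length xs = m}"
    using finite_lists_length_eq[of "{..n}" m] by simp
  ultimately show ?thesis by (rule finite_subset)
qed

lemma H_mono: "H n m \<le> H (n+1) (m+1)"
  unfolding H_def
proof (rule card_inj_on_le[where f="\<lambda>cs. cs @ [1]"])
  show "inj_on (\<lambda>cs. cs @ [1]) {cs \<in> compositions n m. headstrong cs}"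
    by (auto simp: inj_on_def)
  show "(\<lambda>cs. cs @ [1]) ` {cs \<in> compositions n m. headstrong cs}
        \<subseteq> {cs \<in> compositions (n + 1) (m + 1). headstrong cs}"
    by (auto simp: compositions_def headstrong_def hd_append Suc_leI)
  show "finite {cs \<in> compositions (n + 1) (m + 1). headstrong cs}" by (rule fin_comp)
qed

lemma H_one: "H (n+1) 1 \<ge> 1"
proof -
  have "[n+1] \<in> {cs \<in> compositions (n+1) 1. headstrong cs}"
    by (auto simp: compositions_def headstrong_def)
  then have "{cs \<in> compositions (n+1) 1. headstrong cs} \<noteq> {}" by blast
  then show ?thesis unfolding H_def using fin_comp
    by (metis One_nat_def Suc_leI card_gt_0_iff)
qed

theorem mainTheorem17:
  fixes b n :: nat
  assumes "b \<ge> 2" and "n \<ge> 1"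
  shows "2 * (\<Sum>m=1..n. H n m * b ^ m) < (\<Sum>m=1..n+1. H (n+1) m * b ^ m)"
proof -
  have "2 * (\<Sum>m=1..n. H n m * b ^ m) = (\<Sum>m=1..n. 2 * (H n m * b ^ m))"
    by (simp add: sum_distrib_left)
  also have "\<dots> \<le> (\<Sum>m=1..n. H (n+1) (m+1) * b ^ (m+1))"
  proof (rule sum_mono)
    fix m
    have "2 * (H n m * b ^ m) \<le> b * (H n m * b ^ m)" using assms(1) by simp
    also have "\<dots> \<le> b * (H (n+1) (m+1) * b ^ m)" using H_mono[of n m] by simp
    finally show "2 * (H n m * b ^ m) \<le> H (n+1) (m+1) * b ^ (m+1)"
      by (simp add: algebra_simps)
  qed
  also have "\<dots> = (\<Sum>m=Suc 1..Suc n. H (n+1) m * b ^ m)"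
    using sum.shift_bounds_cl_Suc_ivl[where g="\<lambda>m. H (n+1) m * b ^ m" and m=1 and n=n] by simp
  also have "\<dots> < H (n+1) 1 * b ^ 1 + (\<Sum>m=Suc 1..Suc n. H (n+1) m * b ^ m)"
    using H_one[of n] assms(1) by simp
  also have "\<dots> = (\<Sum>m=1..n+1. H (n+1) m * b ^ m)"
    by (subst sum.atLeast_Suc_atMost[of 1 "n+1"]) auto
  finally show ?thesis .
qed

end
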